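(* Consider the network described in the context with homogeneous all-to-all coupling $\varepsilon_{ij}=(1-\delta_{ij})\varepsilon$, $\varepsilon>0$, $(N-1)\varepsilon<1$, with an arbitrary rise function $U$ and an arbitrary partial reset function $R$. Then an asynchronous periodic (splay) state exists. More precisely, there is $\sigma^*>0$ with $\big[\bigodot_{s=1}^{N-1}(S_{\sigma^*}\circ H_\varepsilon)\big]\circ S_{\sigma^*}(0)=1$, and the units fire one at a time with all inter-firing intervals equal to $\sigma^*$.
   Context: Model: $N$ units with phases $\phi_i$. A rise function is a smooth $U:[0,\infty)\to[0,\infty)$ with $U'>0$, $U(0)=0$, $U(1)=1$; $U^{-1}$ is its inverse. A partial reset function is a monotonically increasing $R:\mathbb{R}\to\mathbb{R}$ with $R(0)=0$. For $\varepsilon\ge0$, $\sigma\in\mathbb{R}$: $H_\varepsilon(\phi)=U^{-1}(U(\phi)+\varepsilon)$, $J_\varepsilon(\phi)=U^{-1}(R(U(\phi)+\varepsilon-1))$, $S_\sigma(\phi)=\phi+\sigma$. Composition notation: $\bigodot_{s=p}^{q}(S_{\sigma_s}\circ H_{\varepsilon_s}):=S_{\sigma_q}\circ H_{\varepsilon_q}\circ\cdots\circ S_{\sigma_p}\circ H_{\varepsilon_p}$. Dynamics: $\varepsilon_{ij}\ge0$ is the strength of the pulse from unit $j$ to unit $i$. Between events every phase increases at unit rate. When at time $t$ the set $\Theta^{(0)}=\{j:\phi_j(t^-)=1\}$ is nonempty, an avalanche occurs: with $u_i^{(0)}=U(\phi_i(t^-))$, set $u_i^{(k+1)}=u_i^{(k)}+\sum_{j\in\Theta^{(k)}}\varepsilon_{ij}$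 and $\Theta^{(k+1)}=\{i:u_i^{(k)}<1\le u_i^{(k+1)}\}$ until empty; $\Theta=\bigcup_k\Theta^{(k)}$. Then $\phi_i(t^+)=H_{\sum_{j\in\Theta}\varepsilon_{ij}}(\phi_i(t^-))$ for $i\notin\Theta$ and $\phi_i(t^+)=J_{\sum_{j\in\Theta}\varepsilon_{ij}}(\phi_i(t^-))$ for $i\in\Theta$. The return map sends the state just before a fixed reference unit fires to the state just before it fires next. An asynchronous periodic state is a state invariant under the return map in which every avalanche has size $1$. *)

theory Defs
  imports "HOL-Analysis.Analysis"
begin

definition rise_function :: "(real \<Rightarrow> real) \<Rightarrow> bool" where
  "rise_function U \<longleftrightarrow>
     (\<exists>D :: nat \<Rightarrow> real \<Rightarrow> real. D 0 = U \<and>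
        (\<forall>k. \<forall>x\<ge>0. (D k has_real_derivative D (Suc k) x) (at x within {0..})) \<and>
        (\<forall>x\<ge>0. D 1 x > 0)) \<and>
     U 0 = 0 \<and> U 1 = 1 \<and> (\<forall>x\<ge>0. U x \<ge> 0)"

definition partial_reset :: "(real \<Rightarrow> real) \<Rightarrow> bool" where
  "partial_reset R \<longleftrightarrow> mono R \<and> R 0 = 0"

definition Uinv :: "(real \<Rightarrow> real) \<Rightarrow> real \<Rightarrow> real" where
  "Uinv U y = the_inv_into {0..} U y"

definition Hf :: "(real \<Rightarrow> real) \<Rightarrow> real \<Rightarrow> real \<Rightarrow> real" where
  "Hf U e \<phi> = Uinv U (U \<phi> + e)"

definition Jf :: "(real \<Rightarrow> real) \<Rightarrow> (real \<Rightarrow> real) \<Rightarrow> real \<Rightarrow> real \<Rightarrow> real" where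
  "Jf U R e \<phi> = Uinv U (R (U \<phi> + e - 1))"

definition Sf :: "real \<Rightarrow> real \<Rightarrow> real" where
  "Sf \<sigma> \<phi> = \<phi> + \<sigma>"

text \<open>Avalanche iteration: returns (u^(k), Theta^(k)); units are 0..<N.\<close>
fun aval_seq :: "nat \<Rightarrow> (nat \<Rightarrow> nat \<Rightarrow> real) \<Rightarrow> (real \<Rightarrow> real) \<Rightarrow> (nat \<Rightarrow> real)
                  \<Rightarrow> nat \<Rightarrow> (nat \<Rightarrow> real) \<times> nat set" where
  "aval_seq N eps U \<phi> 0 = (\<lambda>i. U (\<phi> i), {j. j < N \<and> \<phi> j = 1})"
| "aval_seq N eps U \<phi> (Suc k) =
     (let (u, Th) = aval_seq N eps U \<phi> k;
          u' = (\<lambda>i. u i + (\<Sum>j\<in>Th. eps i j))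
      in (u', {i. i < N \<and> u i < 1 \<and> 1 \<le> u' i}))"

definition avalanche :: "nat \<Rightarrow> (nat \<Rightarrow> nat \<Rightarrow> real) \<Rightarrow> (real \<Rightarrow> real) \<Rightarrow> (nat \<Rightarrow> real) \<Rightarrow> nat set" where
  "avalanche N eps U \<phi> = (\<Union>k. snd (aval_seq N eps U \<phi> k))"

definition post_event :: "nat \<Rightarrow> (nat \<Rightarrow> nat \<Rightarrow> real) \<Rightarrow> (real \<Rightarrow> real) \<Rightarrow> (real \<Rightarrow> real)
                           \<Rightarrow> (nat \<Rightarrow> real) \<Rightarrow> (nat \<Rightarrow> real)" where
  "post_event N eps U R \<phi> = (let Th = avalanche N eps U \<phi> in
     (\<lambda>i. if i \<in> Th then Jf U R (\<Sum>j\<in>Th. eps i j) (\<phi> i)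
          else Hf U (\<Sum>j\<in>Th. eps i j) (\<phi> i)))"

text \<open>Time from a state until the next firing (phases grow at unit rate).\<close>
definition time_to_event :: "nat \<Rightarrow> (nat \<Rightarrow> real) \<Rightarrow> real" where
  "time_to_event N \<phi> = 1 - Max (\<phi> ` {..<N})"

definition drift :: "real \<Rightarrow> (nat \<Rightarrow> real) \<Rightarrow> (nat \<Rightarrow> real)" where
  "drift t \<phi> = (\<lambda>i. \<phi> i + t)"

text \<open>Map from the state just before one event to the state just before the next event.\<close>
definition event_map :: "nat \<Rightarrow> (nat \<Rightarrow> nat \<Rightarrow> real) \<Rightarrow> (real \<Rightarrow> real) \<Rightarrow> (real \<Rightarrow> real)
                          \<Rightarrow> (nat \<Rightarrow> real) \<Rightarrow> (nat \<Rightarrow> real)" where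
  "event_map N eps U R \<phi> = (let \<psi> = post_event N eps U R \<phi> in drift (time_to_event N \<psi>) \<psi>)"

definition hom_coupling :: "real \<Rightarrow> nat \<Rightarrow> nat \<Rightarrow> real" where
  "hom_coupling e i j = (if i = j then 0 else e)"

end

theory Submission
  imports Defs
begin


context fixes U :: "real \<Rightarrow> real" assumes rf: "rise_function U" begin

lemma U_cont: "continuous_on {0..} U"
proof -
  from rf obtain D where D: "D 0 = U" "\<forall>k. \<forall>x\<ge>0. (D k has_real_derivative D (Suc k) x) (at x within {0..})"
    unfolding rise_function_def by blast
  show ?thesis
  proof (rule DERIV_continuous_on[where D="D 1"])
    fix x :: real assume "x \<in> {0..}"
    then have "(D 0 has_real_derivative D (Suc 0) x) (at x within {0..})" using D(2) by simp
    then show "(U has_real_derivative D 1 x) (at x within {0..})" using D(1) by simp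
  qed
qed

lemma U_less: assumes "0 \<le> a" "a < b" shows "U a < U b"
proof -
  from rf obtain D where D: "D 0 = U" "\<forall>k. \<forall>x\<ge>0. (D k has_real_derivative D (Suc k) x) (at x within {0..})"
     "\<forall>x\<ge>0. D 1 x > 0"
    unfolding rise_function_def by blast
  show ?thesis
  proof (rule DERIV_pos_imp_increasing_open[OF assms(2)])
    fix x assume x: "a < x" "x < b"
    have "x \<in> interior {0::real..}" using x assms by auto
    hence "at x within {0..} = at x" by (rule at_within_interior)
    moreover have "(D 0 has_real_derivative D (Suc 0) x) (at x within {0..})"
      using D(2) x assms by simp
    ultimately have d: "(U has_real_derivative D 1 x) (at x)" using D(1) by simp
    have "D 1 x > 0" using D(3) x assms by simp
    with d show "\<exists>y. DERIV U x :> y \<and> y > 0" by blast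
  next
    show "continuous_on {a..b} U" using continuous_on_subset[OF U_cont] assms by auto
  qed
qed

lemma U_le_iff: "0 \<le> a \<Longrightarrow> 0 \<le> b \<Longrightarrow> U a \<le> U b \<longleftrightarrow> a \<le> b"
  by (metis U_less linorder_not_le order_le_less)

lemma U_less_iff: "0 \<le> a \<Longrightarrow> 0 \<le> b \<Longrightarrow> U a < U b \<longleftrightarrow> a < b"
  by (meson U_le_iff not_le)

lemma U_inj: "inj_on U {0..}"
  by (rule inj_onI) (metis U_le_iff atLeast_iff order_antisym order_refl)

lemma U01: "U 0 = 0" "U 1 = 1" using rf unfolding rise_function_def by auto

lemma U_img: "U ` {0..1} = {0..1}"
proof
  show "U ` {0..1} \<subseteq> {0..1}"
  proof
    fix y assume "y \<in> U ` {0..1}"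
    then obtain x where x: "0 \<le> x" "x \<le> 1" "y = U x" by auto
    have "U 0 \<le> U x" using U_le_iff[of 0 x] x by simp
    moreover have "U x \<le> U 1" using U_le_iff[of x 1] x by simp
    ultimately show "y \<in> {0..1}" using x U01 by auto
  qed
  show "{0..1} \<subseteq> U ` {0..1}"
  proof
    fix y :: real assume "y \<in> {0..1}"
    then obtain x where "0 \<le> x" "x \<le> 1" "U x = y"
      using IVT'[of U 0 y 1] U01 continuous_on_subset[OF U_cont] by fastforce
    thus "y \<in> U ` {0..1}" by auto
  qed
qed

lemma Uinv_U: "0 \<le> x \<Longrightarrow> Uinv U (U x) = x"
  unfolding Uinv_def using the_inv_into_f_f[OF U_inj] by auto

lemma U_Uinv: assumes "0 \<le> y" "y \<le> 1" shows "U (Uinv U y) = y" "0 \<le> Uinv U y" "Uinv U y \<le> 1"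
proof -
  obtain x where x: "x \<in> {0..1}" "U x = y" using U_img assms by (metis atLeastAtMost_iff imageE)
  then have "Uinv U y = x" using Uinv_U by auto
  then show "U (Uinv U y) = y" "0 \<le> Uinv U y" "Uinv U y \<le> 1" using x by auto
qed

lemma Uinv_cont: "continuous_on {0..1} (Uinv U)"
proof -
  have "continuous_on (U ` {0..1}) (Uinv U)"
    by (rule continuous_on_inv) (use continuous_on_subset[OF U_cont] Uinv_U in auto)
  thus ?thesis using U_img by simp
qed

end



definition Hc :: "(real \<Rightarrow> real) \<Rightarrow> real \<Rightarrow> real \<Rightarrow> real" where
  "Hc U e x = Uinv U (min 1 (U (max 0 (min 1 x)) + e))"

definition orb :: "(real \<Rightarrow> real) \<Rightarrow> real \<Rightarrow> real \<Rightarrow> nat \<Rightarrow> real" where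
  "orb U e \<sigma> k = ((\<lambda>x. Hc U e x + \<sigma>) ^^ k) \<sigma>"

lemma orb_0[simp]: "orb U e \<sigma> 0 = \<sigma>" by (simp add: orb_def)
lemma orb_Suc[simp]: "orb U e \<sigma> (Suc k) = Hc U e (orb U e \<sigma> k) + \<sigma>" by (simp add: orb_def)

context fixes U :: "real \<Rightarrow> real" and e :: real assumes rf: "rise_function U" and e0: "e > 0" begin

lemma clamp_U: "0 \<le> U (max 0 (min 1 x))" "U (max 0 (min 1 x)) \<le> 1"
proof -
  have "U 0 \<le> U (max 0 (min 1 x))" "U (max 0 (min 1 x)) \<le> U 1"
    using U_le_iff[OF rf, of 0 "max 0 (min 1 x)"] U_le_iff[OF rf, of "max 0 (min 1 x)" 1] by auto
  then show "0 \<le> U (max 0 (min 1 x))" "U (max 0 (min 1 x)) \<le> 1" using U01[OF rf] by auto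
qed

lemma Hc_range: "0 \<le> Hc U e x" "Hc U e x \<le> 1"
proof -
  have "0 \<le> min 1 (U (max 0 (min 1 x)) + e)" "min 1 (U (max 0 (min 1 x)) + e) \<le> 1"
    using clamp_U[of x] e0 by auto
  then show "0 \<le> Hc U e x" "Hc U e x \<le> 1" unfolding Hc_def using U_Uinv[OF rf] by auto
qed

lemma Uinv1: "Uinv U 1 = 1" using Uinv_U[OF rf, of 1] U01[OF rf] by simp

lemma Hc_ge1: "x \<ge> 1 \<Longrightarrow> Hc U e x = 1"
  unfolding Hc_def using U01[OF rf] e0 Uinv1 by simp

lemma Hc_cont: "continuous_on UNIV (Hc U e)"
proof -
  have c1: "continuous_on UNIV (\<lambda>x::real. max 0 (min 1 x))"
    by (intro continuous_intros)
  have c2: "continuous_on UNIV (\<lambda>x. U (max 0 (min 1 x)))"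
    by (rule continuous_on_compose2[OF continuous_on_subset[OF U_cont[OF rf]] c1, of "{0..1}"]) auto
  have c3: "continuous_on UNIV (\<lambda>x. min 1 (U (max 0 (min 1 x)) + e))"
    using c2 by (intro continuous_intros)
  have "continuous_on UNIV (\<lambda>x. Uinv U (min 1 (U (max 0 (min 1 x)) + e)))"
    by (rule continuous_on_compose2[OF Uinv_cont[OF rf] c3]) (use clamp_U e0 in auto)
  then show ?thesis unfolding Hc_def[abs_def] by simp
qed

lemma orb_cont: "continuous_on S (\<lambda>\<sigma>. orb U e \<sigma> n)"
proof (induction n)
  case 0 then show ?case by (simp add: continuous_on_id)
next
  case (Suc n)
  have "continuous_on S (\<lambda>\<sigma>. Hc U e (orb U e \<sigma> n))"
    by (rule continuous_on_compose2[OF Hc_cont Suc]) auto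
  then show ?case by (simp add: continuous_intros)
qed

lemma orb_zero: "real k * e \<le> 1 \<Longrightarrow> 0 \<le> orb U e 0 k \<and> orb U e 0 k \<le> 1 \<and> U (orb U e 0 k) = real k * e"
proof (induction k)
  case 0 then show ?case using U01[OF rf] by simp
next
  case (Suc k)
  have ke: "real k * e \<le> 1" using Suc.prems e0 by (simp add: algebra_simps)
  with Suc.IH have ih: "0 \<le> orb U e 0 k" "orb U e 0 k \<le> 1" "U (orb U e 0 k) = real k * e" by auto
  have "max 0 (min 1 (orb U e 0 k)) = orb U e 0 k" using ih by simp
  then have eq: "min 1 (U (max 0 (min 1 (orb U e 0 k))) + e) = real (Suc k) * e"
    using ih Suc.prems by (simp add: algebra_simps)
  have "0 \<le> real (Suc k) * e" using e0 by simp
  then show ?case using U_Uinv[OF rf, of "real (Suc k) * e"] Suc.prems eq by (simp add: Hc_def)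
qed

lemma orb_one: "orb U e 1 n \<ge> 1"
  by (cases n) (use Hc_range in auto)

lemma orb_gt1: "orb U e \<sigma> k \<ge> 1 \<Longrightarrow> \<sigma> > 0 \<Longrightarrow> orb U e \<sigma> (Suc k + j) > 1"
proof (induction j)
  case 0 then show ?case using Hc_ge1 by simp
next
  case (Suc j)
  then show ?case using Hc_ge1 by simp
qed

lemma orb_pos: "\<sigma> > 0 \<Longrightarrow> orb U e \<sigma> k > 0"
  by (cases k) (use Hc_range in \<open>auto simp: add_nonneg_pos\<close>)

end

lemma exists_sigma:
  fixes U :: "real \<Rightarrow> real" and e :: real and N :: nat
  assumes rf: "rise_function U" and e0: "e > 0" and Ne: "real (N - 1) * e < 1"
  shows "\<exists>\<sigma>. 0 < \<sigma> \<and> \<sigma> \<le> 1 \<and> orb U e \<sigma> (N - 1) = 1"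
proof -
  have z: "0 \<le> orb U e 0 (N-1)" "U (orb U e 0 (N-1)) = real (N-1) * e"
    using orb_zero[OF rf e0, of "N-1"] Ne by auto
  have "orb U e 0 (N-1) < 1"
  proof (rule ccontr)
    assume "\<not> orb U e 0 (N-1) < 1"
    then have "U 1 \<le> U (orb U e 0 (N-1))" using U_le_iff[OF rf, of 1] by simp
    then show False using z(2) Ne U01(2)[OF rf] by linarith
  qed
  moreover have "1 \<le> orb U e 1 (N-1)" by (rule orb_one[OF rf e0])
  ultimately obtain \<sigma> where s: "0 \<le> \<sigma>" "\<sigma> \<le> 1" "orb U e \<sigma> (N-1) = 1"
    using IVT'[of "\<lambda>\<sigma>. orb U e \<sigma> (N-1)" 0 1 1] orb_cont[OF rf e0] by fastforce
  moreover have "\<sigma> \<noteq> 0" using s \<open>orb U e 0 (N-1) < 1\<close> by auto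
  ultimately have "0 < \<sigma> \<and> \<sigma> \<le> 1 \<and> orb U e \<sigma> (N - 1) = 1" by auto
  then show ?thesis by blast
qed




context fixes U :: "real \<Rightarrow> real" and e \<sigma> :: real and N :: nat
  assumes rf: "rise_function U" and e0: "e > 0" and s0: "\<sigma> > 0"
    and top: "orb U e \<sigma> (N - 1) = 1"
begin

lemma p_lt1: "k < N - 1 \<Longrightarrow> orb U e \<sigma> k < 1"
proof (rule ccontr)
  assume k: "k < N - 1" and "\<not> orb U e \<sigma> k < 1"
  then have "orb U e \<sigma> k \<ge> 1" by simp
  then have g: "orb U e \<sigma> (Suc k + (N - 2 - k)) > 1" using orb_gt1[OF rf e0, of \<sigma> k] s0 by blast
  have "Suc k + (N - 2 - k) = N - 1" using k by simp
  with g top show False by (metis less_irrefl)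
qed

lemma p_pos: "orb U e \<sigma> k > 0" using orb_pos[OF rf e0 s0] .

lemma p_le1: "k \<le> N - 1 \<Longrightarrow> orb U e \<sigma> k \<le> 1"
proof (cases "k = N - 1")
  case True then show ?thesis using top by simp
next
  case False
  assume "k \<le> N - 1"
  with False have "k < N - 1" by simp
  then show ?thesis using p_lt1 less_imp_le by blast
qed

lemma p_step: assumes k: "k < N - 1"
  shows "U (orb U e \<sigma> k) + e < 1" "Hf U e (orb U e \<sigma> k) = orb U e \<sigma> (Suc k) - \<sigma>"
proof -
  let ?x = "orb U e \<sigma> k"
  have x: "0 < ?x" "?x < 1" using p_pos p_lt1[OF k] by auto
  have "orb U e \<sigma> (Suc k) \<le> 1" using p_le1[of "Suc k"] k by linarith
  then have hc: "Hc U e ?x < 1" using s0 by simp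
  have cl: "max 0 (min 1 ?x) = ?x" using x by simp
  show lt: "U ?x + e < 1"
  proof (rule ccontr)
    assume "\<not> U ?x + e < 1"
    then have "Hc U e ?x = Uinv U 1" unfolding Hc_def cl by simp
    then show False using hc Uinv1[OF rf e0] by simp
  qed
  have "Hc U e ?x = Hf U e ?x" unfolding Hc_def Hf_def cl using lt by simp
  then show "Hf U e (orb U e \<sigma> k) = orb U e \<sigma> (Suc k) - \<sigma>" by simp
qed

lemma p_Hf_range: assumes k: "k < N - 1"
  shows "0 \<le> Hf U e (orb U e \<sigma> k)" "U (Hf U e (orb U e \<sigma> k)) = U (orb U e \<sigma> k) + e"
proof -
  have "0 \<le> orb U e \<sigma> k" using p_pos[of k] by simp
  then have "0 \<le> U (orb U e \<sigma> k)" using U_le_iff[OF rf, of 0 "orb U e \<sigma> k"] U01[OF rf] by simp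
  then show "0 \<le> Hf U e (orb U e \<sigma> k)" "U (Hf U e (orb U e \<sigma> k)) = U (orb U e \<sigma> k) + e"
    unfolding Hf_def using U_Uinv[OF rf, of "U (orb U e \<sigma> k) + e"] p_step(1)[OF k] e0 by auto
qed

lemma iter_eq: "k \<le> N - 1 \<Longrightarrow> ((Sf \<sigma> \<circ> Hf U e) ^^ k) (Sf \<sigma> 0) = orb U e \<sigma> k"
proof (induction k)
  case 0 then show ?case by (simp add: Sf_def)
next
  case (Suc k)
  have "k \<le> N - 1" using Suc.prems by simp
  from Suc.IH[OF this] have ih: "((Sf \<sigma> \<circ> Hf U e) ^^ k) (Sf \<sigma> 0) = orb U e \<sigma> k" .
  have "((Sf \<sigma> \<circ> Hf U e) ^^ Suc k) (Sf \<sigma> 0) = Sf \<sigma> (Hf U e (((Sf \<sigma> \<circ> Hf U e) ^^ k) (Sf \<sigma> 0)))"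
    by simp
  also have "\<dots> = Sf \<sigma> (Hf U e (orb U e \<sigma> k))" by (simp only: ih)
  also have "\<dots> = orb U e \<sigma> (Suc k)" using p_step(2)[of k] Suc.prems by (simp add: Sf_def)
  finally show ?case .
qed

end



lemma M0: assumes "i < (N::nat)" shows "(N - 1 + m - i) mod N = N - 1 \<longleftrightarrow> (N + m - i) mod N = 0"
proof -
  have "N + m - i = Suc (N - 1 + m - i)" using assms by simp
  then show ?thesis using assms by (auto simp: mod_Suc)
qed

lemma M1a: assumes "i < (N::nat)" shows "(N + m - i) mod N = 0 \<longleftrightarrow> i = m mod N"
proof -
  have "(N + m - i) mod N = 0 \<longleftrightarrow> (int N) dvd (int N + int m - int i)" using assms
    by (metis dvd_eq_mod_eq_0 int_dvd_int_iff le_add1 less_imp_le_nat of_nat_add of_nat_diff order_trans)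
  also have "\<dots> \<longleftrightarrow> int N dvd (int m - int i)"
    by (metis add_diff_eq dvd_add_right_iff dvd_refl)
  also have "\<dots> \<longleftrightarrow> int m mod int N = int i mod int N"
    by (simp add: mod_eq_dvd_iff)
  also have "\<dots> \<longleftrightarrow> m mod N = i" using assms
    by (metis mod_less of_nat_eq_iff zmod_int)
  finally show ?thesis by auto
qed

lemma M1: assumes "i < (N::nat)" shows "(N - 1 + m - i) mod N = N - 1 \<longleftrightarrow> i = m mod N"
  using M0 M1a assms by simp

lemma M2: assumes "i < (N::nat)" shows "(N - 1 + Suc m - i) mod N = (if i = m mod N then 0 else Suc ((N - 1 + m - i) mod N))"
proof -
  have "N - 1 + Suc m - i = Suc (N - 1 + m - i)" using assms by simp
  then show ?thesis using M1[OF assms, of m] assms by (auto simp: mod_Suc)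
qed

lemma M3: assumes "(N::nat) \<ge> 2" shows "(N - 1 + m - (Suc m) mod N) mod N = N - 2"
proof -
  let ?i = "Suc m mod N"
  have i: "?i < N" using assms by simp
  have ne: "?i \<noteq> m mod N" using assms by (simp add: mod_Suc)
  have "(N - 1 + Suc m - ?i) mod N = N - 1" using M1[OF i, of "Suc m"] by simp
  moreover have "(N - 1 + Suc m - ?i) mod N = Suc ((N - 1 + m - ?i) mod N)" using M2[OF i, of m] ne by simp
  ultimately show ?thesis by linarith
qed

lemma M4: assumes "i < (N::nat)" shows "(N - 1 + N - i) mod N = (N - 1 - i) mod N"
  by (metis assms mod_add_self2 interval_class.less_imp_less_eq_dec Nat.add_diff_assoc2)



lemma aval_single:
  fixes U :: "real \<Rightarrow> real" and e :: real and \<phi> :: "nat \<Rightarrow> real"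
  assumes U1: "U 1 = 1" and k: "k < N" "\<phi> k = 1"
    and oth: "\<forall>i<N. i \<noteq> k \<longrightarrow> \<phi> i \<noteq> 1 \<and> U (\<phi> i) + e < 1"
  shows "avalanche N (hom_coupling e) U \<phi> = {k}"
proof -
  have th0: "{j. j < N \<and> \<phi> j = 1} = {k}" using k oth by auto
  have a0: "aval_seq N (hom_coupling e) U \<phi> 0 = (\<lambda>i. U (\<phi> i), {k})"
    using th0 by simp
  have a1: "snd (aval_seq N (hom_coupling e) U \<phi> (Suc 0)) = {}"
  proof -
    have "snd (aval_seq N (hom_coupling e) U \<phi> (Suc 0)) =
      {i. i < N \<and> U (\<phi> i) < 1 \<and> 1 \<le> U (\<phi> i) + hom_coupling e i k}"
      by (simp add: th0)
    also have "\<dots> = {}" using oth k U1 by (auto simp: hom_coupling_def)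
    finally show ?thesis .
  qed
  have an: "snd (aval_seq N (hom_coupling e) U \<phi> (Suc n)) = {}" for n
  proof (induction n)
    case 0 then show ?case using a1 by simp
  next
    case (Suc n)
    obtain u Th where ut: "aval_seq N (hom_coupling e) U \<phi> (Suc n) = (u, Th)" by fastforce
    with Suc have th: "Th = {}" by (metis snd_conv)
    have "aval_seq N (hom_coupling e) U \<phi> (Suc (Suc n)) =
       (\<lambda>i. u i + (\<Sum>j\<in>Th. hom_coupling e i j), {i. i < N \<and> u i < 1 \<and> 1 \<le> u i + (\<Sum>j\<in>Th. hom_coupling e i j)})"
      by (simp only: aval_seq.simps(2)[of N "hom_coupling e" U \<phi> "Suc n"] ut Let_def prod.case)
    then show ?case using th by (simp del: aval_seq.simps)
  qed
  have s0: "snd (aval_seq N (hom_coupling e) U \<phi> 0) = {k}" by (simp only: a0 snd_conv)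
  have "snd (aval_seq N (hom_coupling e) U \<phi> n) \<subseteq> {k}" for n
  proof (cases n)
    case 0 then show ?thesis using s0 by (simp only: order_refl)
  next
    case (Suc m) then show ?thesis using an[of m] by (simp only: empty_subsetI)
  qed
  then have "avalanche N (hom_coupling e) U \<phi> \<subseteq> {k}" unfolding avalanche_def by blast
  moreover have "{k} \<subseteq> avalanche N (hom_coupling e) U \<phi>"
    unfolding avalanche_def using s0 by blast
  ultimately show ?thesis by (rule antisym)
qed

definition st :: "(nat \<Rightarrow> real) \<Rightarrow> nat \<Rightarrow> nat \<Rightarrow> nat \<Rightarrow> real" where
  "st p N m i = p ((N - 1 + m - i) mod N)"

context fixes U R :: "real \<Rightarrow> real" and e \<sigma> :: real and N :: nat
  assumes rf: "rise_function U" and pr: "partial_reset R" and e0: "e > 0" and s0: "\<sigma> > 0"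
    and top: "orb U e \<sigma> (N - 1) = 1" and N1: "N \<ge> 1"
begin

abbreviation "p \<equiv> orb U e \<sigma>"

lemma step:
  assumes hyp: "\<forall>i<N. \<phi> i = st p N m i"
  shows "avalanche N (hom_coupling e) U \<phi> = {m mod N}"
    and "time_to_event N (post_event N (hom_coupling e) U R \<phi>) = \<sigma>"
    and "\<forall>i<N. event_map N (hom_coupling e) U R \<phi> i = st p N (Suc m) i"
proof -
  let ?k = "m mod N"
  have kN: "?k < N" using N1 by simp
  have fk: "(N - 1 + m - ?k) mod N = N - 1" using M1[OF kN] by simp
  have phik: "\<phi> ?k = 1" using hyp kN fk top by (simp add: st_def)
  have jlt: "(N - 1 + m - i) mod N < N - 1" if "i < N" "i \<noteq> ?k" for i
  proof -
    have "(N - 1 + m - i) mod N < N" using N1 by simp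
    moreover have "(N - 1 + m - i) mod N \<noteq> N - 1" using M1[OF that(1)] that(2) by simp
    ultimately show ?thesis by linarith
  qed
  have oth: "\<forall>i<N. i \<noteq> ?k \<longrightarrow> \<phi> i \<noteq> 1 \<and> U (\<phi> i) + e < 1"
  proof (intro allI impI)
    fix i assume i: "i < N" "i \<noteq> ?k"
    have "\<phi> i = p ((N - 1 + m - i) mod N)" using hyp i by (simp add: st_def)
    then show "\<phi> i \<noteq> 1 \<and> U (\<phi> i) + e < 1"
      using p_lt1[OF rf e0 s0 top jlt[OF i]] p_step(1)[OF rf e0 s0 top jlt[OF i]] by simp
  qed
  show av: "avalanche N (hom_coupling e) U \<phi> = {m mod N}"
    by (rule aval_single[OF U01(2)[OF rf] kN phik oth])
  define \<psi> where "\<psi> = post_event N (hom_coupling e) U R \<phi>"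
  have Uinv0: "Uinv U 0 = 0" using Uinv_U[OF rf, of 0] U01[OF rf] by simp
  have psik: "\<psi> ?k = 0"
    using pr phik Uinv0 U01[OF rf]
    by (simp add: \<psi>_def post_event_def av hom_coupling_def Let_def Jf_def partial_reset_def)
  have psii: "\<psi> i = p (Suc ((N - 1 + m - i) mod N)) - \<sigma>" if i: "i < N" "i \<noteq> ?k" for i
  proof -
    have "\<psi> i = Hf U e (\<phi> i)" using i by (simp add: \<psi>_def post_event_def av hom_coupling_def Let_def)
    also have "\<dots> = Hf U e (p ((N - 1 + m - i) mod N))" using hyp i by (simp add: st_def)
    also have "\<dots> = p (Suc ((N - 1 + m - i) mod N)) - \<sigma>" by (rule p_step(2)[OF rf e0 s0 top jlt[OF i]])
    finally show ?thesis .
  qed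
  have s1: "\<sigma> \<le> 1" using p_le1[OF rf e0 s0 top, of 0] by simp
  have "Max (\<psi> ` {..<N}) = 1 - \<sigma>"
  proof (rule Max_eqI)
    show "finite (\<psi> ` {..<N})" by simp
  next
    fix y assume "y \<in> \<psi> ` {..<N}"
    then obtain i where i: "i < N" "y = \<psi> i" by auto
    show "y \<le> 1 - \<sigma>"
    proof (cases "i = ?k")
      case True then show ?thesis using i psik s1 by simp
    next
      case False
      have "Suc ((N - 1 + m - i) mod N) \<le> N - 1" by (rule Suc_leI[OF jlt[OF i(1) False]])
      then have "p (Suc ((N - 1 + m - i) mod N)) \<le> 1" by (rule p_le1[OF rf e0 s0 top])
      then show ?thesis using psii[OF i(1) False] i by simp
    qed
  next
    show "1 - \<sigma> \<in> \<psi> ` {..<N}"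
    proof (cases "N = 1")
      case True
      then have "\<sigma> = 1" using top by simp
      then show ?thesis using psik kN by force
    next
      case False
      then have N2: "N \<ge> 2" using N1 by simp
      let ?i = "Suc m mod N"
      have iN: "?i < N" using N1 by simp
      have fi: "(N - 1 + m - ?i) mod N = N - 2" by (rule M3[OF N2])
      have ik: "?i \<noteq> ?k" using fi M1[OF iN, of m] N2 by auto
      have "\<psi> ?i = p (Suc (N - 2)) - \<sigma>" using psii[OF iN ik] fi by simp
      also have "Suc (N - 2) = N - 1" using N2 by simp
      finally have "\<psi> ?i = 1 - \<sigma>" using top by simp
      then show ?thesis using iN by (metis image_eqI lessThan_iff)
    qed
  qed
  then show "time_to_event N (post_event N (hom_coupling e) U R \<phi>) = \<sigma>"
    by (simp add: time_to_event_def \<psi>_def)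
  show "\<forall>i<N. event_map N (hom_coupling e) U R \<phi> i = st p N (Suc m) i"
  proof (intro allI impI)
    fix i assume i: "i < N"
    have em: "event_map N (hom_coupling e) U R \<phi> i = \<psi> i + \<sigma>"
      using \<open>Max (\<psi> ` {..<N}) = 1 - \<sigma>\<close>
      by (simp add: event_map_def \<psi>_def[symmetric] time_to_event_def drift_def)
    show "event_map N (hom_coupling e) U R \<phi> i = st p N (Suc m) i"
    proof (cases "i = ?k")
      case True
      have "(N - 1 + Suc m - i) mod N = 0" using M2[OF i, of m] True by simp
      then have "st p N (Suc m) i = \<sigma>" by (simp add: st_def)
      then show ?thesis using em psik True by simp
    next
      case False
      have "(N - 1 + Suc m - i) mod N = Suc ((N - 1 + m - i) mod N)" using M2[OF i, of m] False by simp
      then have "st p N (Suc m) i = p (Suc ((N - 1 + m - i) mod N))" by (simp only: st_def)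
      then show ?thesis unfolding em psii[OF i False] by simp
    qed
  qed
qed

end



theorem mainTheorem2:
  fixes N :: nat and e :: real and U R :: "real \<Rightarrow> real"
  assumes "N \<ge> 1" and "e > 0" and "real (N - 1) * e < 1"
    and "rise_function U" and "partial_reset R"
  shows "\<exists>\<sigma>>0. ((Sf \<sigma> \<circ> Hf U e) ^^ (N - 1)) (Sf \<sigma> 0) = 1 \<and>
     (\<exists>\<phi>0 :: nat \<Rightarrow> real.
        \<phi>0 0 = 1 \<and> (\<forall>i<N. 0 \<le> \<phi>0 i \<and> \<phi>0 i \<le> 1) \<and>
        (let traj = (\<lambda>m. (event_map N (hom_coupling e) U R ^^ m) \<phi>0) in
           (\<forall>m. \<exists>k<N. avalanche N (hom_coupling e) U (traj m) = {k}) \<and>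
           (\<forall>m. time_to_event N (post_event N (hom_coupling e) U R (traj m)) = \<sigma>) \<and>
           (\<forall>m m'. m < N \<and> m' < N \<and> m \<noteq> m' \<longrightarrow>
               avalanche N (hom_coupling e) U (traj m) \<noteq> avalanche N (hom_coupling e) U (traj m')) \<and>
           (\<forall>i<N. traj N i = \<phi>0 i)))"
proof -
  note N1 = assms(1) and e0 = assms(2) and rf = assms(4) and pr = assms(5)
  obtain \<sigma> where s0: "0 < \<sigma>" and s1: "\<sigma> \<le> 1" and top: "orb U e \<sigma> (N - 1) = 1"
    using exists_sigma[OF rf e0 assms(3)] by blast
  let ?p = "orb U e \<sigma>"
  have it: "((Sf \<sigma> \<circ> Hf U e) ^^ (N - 1)) (Sf \<sigma> 0) = 1"
    using iter_eq[OF rf e0 s0 top, of "N - 1"] top by simp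
  define \<phi>0 where "\<phi>0 = st ?p N 0"
  define traj where "traj = (\<lambda>m. (event_map N (hom_coupling e) U R ^^ m) \<phi>0)"
  have tr: "\<forall>i<N. traj m i = st ?p N m i" for m
  proof (induction m)
    case 0 then show ?case by (simp add: traj_def \<phi>0_def)
  next
    case (Suc m)
    have ts: "traj (Suc m) = event_map N (hom_coupling e) U R (traj m)" by (simp add: traj_def)
    show ?case
    proof (intro allI impI)
      fix i assume i: "i < N"
      show "traj (Suc m) i = st ?p N (Suc m) i"
        unfolding ts using step(3)[OF rf pr e0 s0 top N1 Suc] i by blast
    qed
  qed
  have A: "\<forall>m. \<exists>k<N. avalanche N (hom_coupling e) U (traj m) = {k}"
  proof
    fix m
    have "avalanche N (hom_coupling e) U (traj m) = {m mod N}" by (rule step(1)[OF rf pr e0 s0 top N1 tr])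
    moreover have "m mod N < N" using N1 by simp
    ultimately show "\<exists>k<N. avalanche N (hom_coupling e) U (traj m) = {k}" by blast
  qed
  have T: "\<forall>m. time_to_event N (post_event N (hom_coupling e) U R (traj m)) = \<sigma>"
    using step(2)[OF rf pr e0 s0 top N1 tr] by blast
  have Dst: "\<forall>m m'. m < N \<and> m' < N \<and> m \<noteq> m' \<longrightarrow>
               avalanche N (hom_coupling e) U (traj m) \<noteq> avalanche N (hom_coupling e) U (traj m')"
    using step(1)[OF rf pr e0 s0 top N1 tr] by simp
  have P: "\<forall>i<N. traj N i = \<phi>0 i"
  proof (intro allI impI)
    fix i assume i: "i < N"
    have "traj N i = ?p ((N - 1 + N - i) mod N)" using tr i by (simp add: st_def)
    also have "\<dots> = ?p ((N - 1 - i) mod N)" using M4[OF i] by simp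
    also have "\<dots> = \<phi>0 i" by (simp add: \<phi>0_def st_def)
    finally show "traj N i = \<phi>0 i" .
  qed
  have z: "\<phi>0 0 = 1" using top N1 by (simp add: \<phi>0_def st_def)
  have r: "\<forall>i<N. 0 \<le> \<phi>0 i \<and> \<phi>0 i \<le> 1"
  proof (intro allI impI)
    fix i assume i: "i < N"
    have "(N - 1 - i) mod N \<le> N - 1" using mod_less_eq_dividend[of "N - 1 - i" N] by linarith
    then show "0 \<le> \<phi>0 i \<and> \<phi>0 i \<le> 1"
      using p_le1[OF rf e0 s0 top] p_pos[OF rf e0 s0 top] by (simp add: \<phi>0_def st_def less_imp_le)
  qed
  have L: "let traj' = traj in
           (\<forall>m. \<exists>k<N. avalanche N (hom_coupling e) U (traj' m) = {k}) \<and>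
           (\<forall>m. time_to_event N (post_event N (hom_coupling e) U R (traj' m)) = \<sigma>) \<and>
           (\<forall>m m'. m < N \<and> m' < N \<and> m \<noteq> m' \<longrightarrow>
               avalanche N (hom_coupling e) U (traj' m) \<noteq> avalanche N (hom_coupling e) U (traj' m')) \<and>
           (\<forall>i<N. traj' N i = \<phi>0 i)"
    unfolding Let_def using A T Dst P by (intro conjI)
  show ?thesis
    apply (rule exI[of _ \<sigma>])
    apply (rule conjI[OF s0])
    apply (rule conjI[OF it])
    apply (rule exI[of _ \<phi>0])
    using z r L unfolding traj_def by (intro conjI)
qed


end
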